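(* For every instance $(A,C,k)$, every committee $W$ that the Method of Equal Shares (MES) can output (under any tie-breaking), and every AV-completion $\overline{W}$ of $W$, the utilitarian ratio of $\overline{W}$ is at least $\frac{2}{\sqrt{k}}-\frac2k$.
   Context: An instance $(A,C,k)$ consists of a finite nonempty candidate set $C$, voters $N=\{1,\dots,n\}$, approval sets $A_i\subseteq C$, and a committee size $1\le k\le|C|$. $N_c=\{i: c\in A_i\}$. $\mathrm{sw}(W)=\sum_i|A_i\cap W|$; the utilitarian ratio of $W$ is $\mathrm{sw}(W)/\max\{\mathrm{sw}(W'):|W'|=k\}$. MES starts with $W=\emptyset$ and budgets $b_i=k/n$ for all $i\in N$. In each round, for each $c\in C\setminus W$ it determines the value $\rho\ge0$ (if any) with $\sum_{i\in N_c}\min(b_i,\rho)=1$; if no unselected candidate has such a $\rho$, MES terminates and outputs $W$; otherwise it adds a candidate $c$ with minimum $\rho$ (ties arbitrary) to $W$ and sets $b_i\leftarrow b_i-\min(b_i,\rho)$ for each $i\in N_c$. An AV-completion of $W$ is $W\cup T$ with $T\subseteq C\setminus W$, $|T|=k-|W|$, maximizing $\sum_{c\in T}|N_c|$. *)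

theory Defs
  imports Complex_Main
begin

definition voters :: "nat \<Rightarrow> nat set" where
  "voters n = {1..n}"

definition supporters :: "(nat \<Rightarrow> 'c set) \<Rightarrow> nat \<Rightarrow> 'c \<Rightarrow> nat set" where
  "supporters A n c = {i \<in> voters n. c \<in> A i}"

definition valid_instance :: "(nat \<Rightarrow> 'c set) \<Rightarrow> 'c set \<Rightarrow> nat \<Rightarrow> nat \<Rightarrow> bool" where
  "valid_instance A C k n \<longleftrightarrow> finite C \<and> C \<noteq> {} \<and> n \<ge> 1 \<and>
     (\<forall>i\<in>voters n. A i \<subseteq> C) \<and> 1 \<le> k \<and> k \<le> card C"

definition sw :: "(nat \<Rightarrow> 'c set) \<Rightarrow> nat \<Rightarrow> 'c set \<Rightarrow> nat" where
  "sw A n W = (\<Sum>i\<in>voters n. card (A i \<inter> W))"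

definition opt_sw :: "(nat \<Rightarrow> 'c set) \<Rightarrow> 'c set \<Rightarrow> nat \<Rightarrow> nat \<Rightarrow> nat" where
  "opt_sw A C k n = Max {sw A n W' | W'. W' \<subseteq> C \<and> card W' = k}"

definition util_ratio :: "(nat \<Rightarrow> 'c set) \<Rightarrow> 'c set \<Rightarrow> nat \<Rightarrow> nat \<Rightarrow> 'c set \<Rightarrow> real" where
  "util_ratio A C k n W = real (sw A n W) / real (opt_sw A C k n)"

definition affordable_at :: "(nat \<Rightarrow> 'c set) \<Rightarrow> nat \<Rightarrow> (nat \<Rightarrow> real) \<Rightarrow> 'c \<Rightarrow> real \<Rightarrow> bool" where
  "affordable_at A n b c \<rho> \<longleftrightarrow> \<rho> \<ge> 0 \<and> (\<Sum>i\<in>supporters A n c. min (b i) \<rho>) = 1"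

text \<open>Reachable MES states (committee, budgets), under arbitrary tie-breaking.\<close>
inductive mes_reach :: "(nat \<Rightarrow> 'c set) \<Rightarrow> 'c set \<Rightarrow> nat \<Rightarrow> nat \<Rightarrow> 'c set \<Rightarrow> (nat \<Rightarrow> real) \<Rightarrow> bool"
  for A C k n where
  init: "mes_reach A C k n {} (\<lambda>i. real k / real n)"
| step: "\<lbrakk> mes_reach A C k n W b; c \<in> C - W; affordable_at A n b c \<rho>;
           \<forall>c'\<in>C - W. \<forall>\<rho>'. affordable_at A n b c' \<rho>' \<longrightarrow> \<rho> \<le> \<rho>' \<rbrakk>
        \<Longrightarrow> mes_reach A C k n (insert c W)
              (\<lambda>i. if i \<in> supporters A n c then b i - min (b i) \<rho> else b i)"

definition mes_outcome :: "(nat \<Rightarrow> 'c set) \<Rightarrow> 'c set \<Rightarrow> nat \<Rightarrow> nat \<Rightarrow> 'c set \<Rightarrow> bool" where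
  "mes_outcome A C k n W \<longleftrightarrow>
     (\<exists>b. mes_reach A C k n W b \<and> (\<forall>c\<in>C - W. \<forall>\<rho>. \<not> affordable_at A n b c \<rho>))"

definition av_completion :: "(nat \<Rightarrow> 'c set) \<Rightarrow> 'c set \<Rightarrow> nat \<Rightarrow> nat \<Rightarrow> 'c set \<Rightarrow> 'c set \<Rightarrow> bool" where
  "av_completion A C k n W Wbar \<longleftrightarrow>
     (\<exists>T. T \<subseteq> C - W \<and> card T = k - card W \<and>
          (\<forall>T'. T' \<subseteq> C - W \<and> card T' = k - card W \<longrightarrow>
                (\<Sum>c\<in>T'. card (supporters A n c)) \<le> (\<Sum>c\<in>T. card (supporters A n c))) \<and>
          Wbar = W \<union> T)"

end

theory Submission
  imports Defs
begin

lemma supp_sub: "supporters A n c \<subseteq> voters n" by (auto simp: supporters_def)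
lemma fin_voters: "finite (voters n)" by (simp add: voters_def)
lemma fin_supp: "finite (supporters A n c)" using finite_subset[OF supp_sub fin_voters] .
lemma card_voters: "card (voters n) = n" by (simp add: voters_def)

lemma sum_upd:
  fixes b :: "nat \<Rightarrow> real"
  shows "(\<Sum>i\<in>voters n. (if i \<in> supporters A n c then b i - min (b i) \<rho> else b i))
        = (\<Sum>i\<in>voters n. b i) - (\<Sum>i\<in>supporters A n c. min (b i) \<rho>)"
proof -
  have "(\<Sum>i\<in>voters n. (if i \<in> supporters A n c then b i - min (b i) \<rho> else b i))
      = (\<Sum>i\<in>voters n. b i - (if i \<in> supporters A n c then min (b i) \<rho> else 0))"
    by (rule sum.cong) auto
  also have "\<dots> = (\<Sum>i\<in>voters n. b i) - (\<Sum>i\<in>voters n. (if i \<in> supporters A n c then min (b i) \<rho> else 0))"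
    by (simp add: sum_subtractf)
  also have "(\<Sum>i\<in>voters n. (if i \<in> supporters A n c then min (b i) \<rho> else 0)) = (\<Sum>i\<in>voters n \<inter> supporters A n c. min (b i) \<rho>)"
    by (simp add: sum.inter_restrict fin_voters)
  also have "voters n \<inter> supporters A n c = supporters A n c" using supp_sub[of A n c] by blast
  finally show ?thesis .
qed

lemma rho_bound:
  fixes b :: "nat \<Rightarrow> real"
  assumes aff: "affordable_at A n b c \<rho>" and bd: "\<forall>i. b i \<le> \<beta>" and beta: "\<beta> \<ge> 0"
    and minr: "\<And>\<rho>'. affordable_at A n b c \<rho>' \<Longrightarrow> \<rho> \<le> \<rho>'"
  shows "\<rho> \<le> \<beta>"
proof (rule ccontr)
  assume "\<not> \<rho> \<le> \<beta>"
  then have "\<And>i. min (b i) \<beta> = min (b i) \<rho>" using bd by (metis min.absorb1 not_le order.trans less_imp_le)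
  then have "affordable_at A n b c \<beta>" using aff beta unfolding affordable_at_def by simp
  then have "\<rho> \<le> \<beta>" by (rule minr)
  with \<open>\<not> \<rho> \<le> \<beta>\<close> show False by simp
qed

lemma card_bound:
  fixes b :: "nat \<Rightarrow> real"
  assumes aff: "affordable_at A n b c \<rho>" and r: "\<rho> \<le> \<beta>"
  shows "1 \<le> real (card (supporters A n c)) * \<beta>"
proof -
  have "1 = (\<Sum>i\<in>supporters A n c. min (b i) \<rho>)" using aff unfolding affordable_at_def by simp
  also have "\<dots> \<le> (\<Sum>i\<in>supporters A n c. \<beta>)" by (rule sum_mono) (use r in auto)
  also have "\<dots> = real (card (supporters A n c)) * \<beta>" by simp
  finally show ?thesis .
qed

lemma basic_inv:
  assumes "mes_reach A C k n W b" "n \<ge> 1" "k \<ge> 1"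
  shows "W \<subseteq> C \<and> finite W \<and> (\<forall>i. 0 \<le> b i \<and> b i \<le> real k / real n) \<and>
     (\<Sum>i\<in>voters n. b i) = real k - real (card W) \<and>
     (\<forall>w\<in>W. 1 \<le> real (card (supporters A n w)) * (real k / real n))"
  using assms
proof (induction rule: mes_reach.induct)
  case init
  then show ?case by (simp add: card_voters)
next
  case (step W b c \<rho>)
  define \<beta> where "\<beta> = real k / real n"
  from step have IH: "W \<subseteq> C" "finite W" "\<forall>i. 0 \<le> b i \<and> b i \<le> \<beta>"
    "(\<Sum>i\<in>voters n. b i) = real k - real (card W)"
    "\<forall>w\<in>W. 1 \<le> real (card (supporters A n w)) * \<beta>" by (auto simp: \<beta>_def)
  have r0: "\<rho> \<ge> 0" using step(3) by (simp add: affordable_at_def)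
  have rb: "\<rho> \<le> \<beta>"
    by (rule rho_bound[OF step(3)]) (use IH step(2,4) in \<open>auto simp: \<beta>_def\<close>)
  have cb: "1 \<le> real (card (supporters A n c)) * \<beta>" by (rule card_bound[OF step(3) rb])
  have s1: "(\<Sum>i\<in>supporters A n c. min (b i) \<rho>) = 1" using step(3) by (simp add: affordable_at_def)
  have cW: "c \<notin> W" "c \<in> C" using step(2) by auto
  have bnd: "\<forall>i. 0 \<le> (if i \<in> supporters A n c then b i - min (b i) \<rho> else b i) \<and>
      (if i \<in> supporters A n c then b i - min (b i) \<rho> else b i) \<le> \<beta>"
  proof
    fix i show "0 \<le> (if i \<in> supporters A n c then b i - min (b i) \<rho> else b i) \<and>
      (if i \<in> supporters A n c then b i - min (b i) \<rho> else b i) \<le> \<beta>"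
      using IH(3)[THEN spec, of i] r0 by (cases "i \<in> supporters A n c") (auto simp: min_def)
  qed
  have sm: "(\<Sum>i\<in>voters n. (if i \<in> supporters A n c then b i - min (b i) \<rho> else b i)) = real k - real (card (insert c W))"
    by (simp only: sum_upd s1 IH(4)) (use IH(2) cW in simp)
  show ?case
    unfolding \<beta>_def[symmetric]
    using IH cb cW bnd sm by auto
qed

lemma afford_theta:
  fixes b :: "nat \<Rightarrow> real"
  assumes "card (supporters A n c) = x" "x \<ge> 1" "\<forall>i\<in>supporters A n c. 1 / real x \<le> b i"
  shows "affordable_at A n b c (1 / real x)"
proof -
  have "(\<Sum>i\<in>supporters A n c. min (b i) (1 / real x)) = (\<Sum>i\<in>supporters A n c. 1 / real x)"
    by (rule sum.cong) (use assms(3) in auto)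
  also have "\<dots> = 1" using assms(1,2) by simp
  finally show ?thesis unfolding affordable_at_def by simp
qed

definition cnt :: "(nat \<Rightarrow> 'c set) \<Rightarrow> nat \<Rightarrow> nat \<Rightarrow> 'c set \<Rightarrow> nat" where
  "cnt A n x W = card {w\<in>W. x \<le> card (supporters A n w)}"

lemma cheap_inv:
  assumes "mes_reach A C k n W b" "n \<ge> 1" "k \<ge> 1" "c \<in> C" "card (supporters A n c) = x" "x \<ge> 1"
  shows "c \<notin> W \<longrightarrow> (real (cnt A n x W) > real x * real k / real n - 1 \<or>
     (\<forall>i\<in>supporters A n c. real k / real n - b i \<le> real (cnt A n x W) / real x))"
  using assms
proof (induction rule: mes_reach.induct)
  case init
  then show ?case by (simp add: cnt_def)
next
  case (step W b c' \<rho>)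
  have BI: "finite W" "\<forall>i. 0 \<le> b i \<and> b i \<le> real k / real n"
    using basic_inv[OF step.hyps(1) step.prems(1,2)] by auto
  have c'W: "c' \<notin> W" using step.hyps(2) by auto
  have mono: "cnt A n x W \<le> cnt A n x (insert c' W)"
    unfolding cnt_def by (rule card_mono) (use BI(1) in auto)
  show ?case
  proof
    assume cnot: "c \<notin> insert c' W"
    then have cW: "c \<notin> W" by auto
    with step.IH step.prems have IH: "real (cnt A n x W) > real x * real k / real n - 1 \<or>
     (\<forall>i\<in>supporters A n c. real k / real n - b i \<le> real (cnt A n x W) / real x)" by blast
    show "real (cnt A n x (insert c' W)) > real x * real k / real n - 1 \<or>
     (\<forall>i\<in>supporters A n c. real k / real n - (if i \<in> supporters A n c' then b i - min (b i) \<rho> else b i)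
        \<le> real (cnt A n x (insert c' W)) / real x)"
    proof (cases "real (cnt A n x W) > real x * real k / real n - 1")
      case True
      then show ?thesis using mono by linarith
    next
      case False
      with IH have H: "\<forall>i\<in>supporters A n c. real k / real n - b i \<le> real (cnt A n x W) / real x" by blast
      have xpos: "real x > 0" using step.prems(5) by simp
      have cle: "real (cnt A n x W) / real x \<le> real k / real n - 1 / real x"
      proof -
        have "real (cnt A n x W) \<le> real x * real k / real n - 1" using False by simp
        then have "real (cnt A n x W) / real x \<le> (real x * real k / real n - 1) / real x"
          using xpos by (simp add: divide_right_mono)
        also have "\<dots> = real k / real n - 1 / real x" using xpos by (simp add: field_simps)
        finally show ?thesis .
      qed
      have bth: "\<forall>i\<in>supporters A n c. 1 / real x \<le> b i" using H cle by fastforce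
      have aff: "affordable_at A n b c (1 / real x)"
        by (rule afford_theta[OF step.prems(4,5) bth])
      have rle: "\<rho> \<le> 1 / real x" using step.hyps(4) aff cW step.prems(3) by blast
      have "1 \<le> real (card (supporters A n c')) * (1 / real x)"
        by (rule card_bound[OF step.hyps(3) rle])
      then have "real x \<le> real (card (supporters A n c'))" using xpos by (simp add: field_simps)
      then have big: "x \<le> card (supporters A n c')" by simp
      have ceq: "cnt A n x (insert c' W) = cnt A n x W + 1"
      proof -
        have "{w\<in>insert c' W. x \<le> card (supporters A n w)} = insert c' {w\<in>W. x \<le> card (supporters A n w)}"
          using big by auto
        then show ?thesis unfolding cnt_def using c'W BI(1) by simp
      qed
      have r0: "\<rho> \<ge> 0" using step.hyps(3) by (simp add: affordable_at_def)
      have "\<forall>i\<in>supporters A n c. real k / real n - (if i \<in> supporters A n c' then b i - min (b i) \<rho> else b i)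
        \<le> real (cnt A n x (insert c' W)) / real x"
      proof
        fix i assume i: "i \<in> supporters A n c"
        have "real k / real n - (if i \<in> supporters A n c' then b i - min (b i) \<rho> else b i)
              \<le> real k / real n - b i + 1 / real x"
          using rle r0 xpos by (auto simp: min_def)
        also have "\<dots> \<le> real (cnt A n x W) / real x + 1 / real x" using H i by auto
        also have "\<dots> = real (cnt A n x (insert c' W)) / real x" using ceq by (simp add: add_divide_distrib)
        finally show "real k / real n - (if i \<in> supporters A n c' then b i - min (b i) \<rho> else b i)
              \<le> real (cnt A n x (insert c' W)) / real x" .
      qed
      then show ?thesis by blast
    qed
  qed
qed

lemma cheap_final:
  assumes "mes_reach A C k n W b" "n \<ge> 1" "k \<ge> 1" "c \<in> C" "c \<notin> W"
    "card (supporters A n c) = x" "x \<ge> 1" "\<forall>\<rho>. \<not> affordable_at A n b c \<rho>"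
  shows "real (cnt A n x W) > real x * real k / real n - 1"
proof (rule ccontr)
  assume F: "\<not> ?thesis"
  with cheap_inv[OF assms(1-4,6,7)] assms(5)
  have H: "\<forall>i\<in>supporters A n c. real k / real n - b i \<le> real (cnt A n x W) / real x" by blast
  have xpos: "real x > 0" using assms(7) by simp
  have cle: "real (cnt A n x W) / real x \<le> real k / real n - 1 / real x"
  proof -
    have "real (cnt A n x W) \<le> real x * real k / real n - 1" using F by simp
    then have "real (cnt A n x W) / real x \<le> (real x * real k / real n - 1) / real x"
      using xpos by (simp add: divide_right_mono)
    also have "\<dots> = real k / real n - 1 / real x" using xpos by (simp add: field_simps)
    finally show ?thesis .
  qed
  have bth: "\<forall>i\<in>supporters A n c. 1 / real x \<le> b i" using H cle by fastforce
  have "affordable_at A n b c (1 / real x)" by (rule afford_theta[OF assms(6,7) bth])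
  with assms(8) show False by blast
qed

lemma sw_eq:
  assumes "finite X"
  shows "sw A n X = (\<Sum>c\<in>X. card (supporters A n c))"
proof -
  have "sw A n X = (\<Sum>i\<in>voters n. \<Sum>c\<in>X. (if c \<in> A i then 1 else 0::nat))"
    unfolding sw_def
  proof (rule sum.cong)
    fix i show "card (A i \<inter> X) = (\<Sum>c\<in>X. (if c \<in> A i then 1 else 0::nat))"
    proof -
      have "card (A i \<inter> X) = card (X \<inter> A i)" by (simp add: Int_commute)
      also have "\<dots> = (\<Sum>c\<in>X \<inter> A i. 1::nat)" by simp
      also have "\<dots> = (\<Sum>c\<in>X. (if c \<in> A i then 1 else 0::nat))" by (rule sum.inter_restrict[OF assms])
      finally show ?thesis .
    qed
  qed simp
  also have "\<dots> = (\<Sum>c\<in>X. \<Sum>i\<in>voters n. (if c \<in> A i then 1 else 0::nat))" by (rule sum.swap)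
  also have "\<dots> = (\<Sum>c\<in>X. card (supporters A n c))"
  proof (rule sum.cong)
    fix c show "(\<Sum>i\<in>voters n. (if c \<in> A i then 1 else 0::nat)) = card (supporters A n c)"
    proof -
      have "(\<Sum>i\<in>voters n. (if i \<in> {i. c \<in> A i} then 1 else 0::nat)) = (\<Sum>i\<in>voters n \<inter> {i. c \<in> A i}. 1)"
        by (rule sum.inter_restrict[OF fin_voters, symmetric])
      also have "\<dots> = card (supporters A n c)" by (simp add: supporters_def Int_def)
      finally show ?thesis by simp
    qed
  qed simp
  finally show ?thesis .
qed

lemma alg:
  fixes k m c x u :: real
  assumes "k \<ge> 1" "0 \<le> m" "m \<le> k" "u > 0" "x > u" "c > x / u - 1" "c \<le> m"
  shows "m * u + c * (x - u) \<ge> (2 / sqrt k - 2 / k) * m * x"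
proof -
  define y where "y = x / u"
  define r where "r = sqrt k"
  have xy: "x = y * u" using assms(4) by (simp add: y_def)
  have r1: "r \<ge> 1" using assms(1) by (simp add: r_def)
  have rk: "r * r = k" using assms(1) by (simp add: r_def)
  have y1: "y > 1" using assms(4,5) by (simp add: y_def)
  have al: "2 / sqrt k - 2 / k = 2 / r - 2 / (r * r)" unfolding rk r_def using assms(1) by simp
  have alk: "(2 / r - 2 / (r * r)) * k = 2 * r - 2" using r1 rk[symmetric] by (simp add: field_simps)
  define \<alpha> where "\<alpha> = 2 / r - 2 / (r * r)"
  have a0: "\<alpha> \<ge> 0" unfolding \<alpha>_def using r1 by (simp add: field_simps)
  have step1: "m * u + c * (x - u) \<ge> u * (m + (y - 1) * (y - 1))"
  proof -
    have "c * (x - u) \<ge> (y - 1) * (x - u)" using assms(5,6) by (intro mult_right_mono) (auto simp: y_def)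
    then show ?thesis unfolding xy by (simp add: algebra_simps)
  qed
  have step2: "m + (y - 1) * (y - 1) \<ge> \<alpha> * m * y"
  proof (cases "\<alpha> * y \<le> 1")
    case True
    then have "\<alpha> * m * y \<le> m" using assms(2) by (metis mult.commute mult.left_commute mult_left_mono mult.right_neutral)
    then show ?thesis by (smt (verit) zero_le_square mult.commute)
  next
    case False
    have "m * (\<alpha> * y - 1) \<le> k * (\<alpha> * y - 1)" using False assms(3) by (intro mult_right_mono) auto
    also have "\<dots> = (\<alpha> * k) * y - k" by (simp add: algebra_simps)
    also have "\<dots> = (2 * r - 2) * y - r * r" using alk rk unfolding \<alpha>_def by simp
    finally have "m * (\<alpha> * y - 1) \<le> (2 * r - 2) * y - r * r" .
    moreover have "(y - r) * (y - r) \<ge> 0" by simp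
    ultimately show ?thesis by (simp add: algebra_simps)
  qed
  have "\<alpha> * m * x = u * (\<alpha> * m * y)" unfolding xy by simp
  also have "\<dots> \<le> u * (m + (y - 1) * (y - 1))" using step2 assms(4) by (simp add: mult_left_mono)
  also have "\<dots> \<le> m * u + c * (x - u)" by (rule step1)
  finally show ?thesis using al unfolding \<alpha>_def by simp
qed

lemma alpha_bounds:
  assumes "k \<ge> (1::nat)"
  shows "0 \<le> 2 / sqrt (real k) - 2 / real k" "2 / sqrt (real k) - 2 / real k \<le> 1"
proof -
  define r where "r = sqrt (real k)"
  have r1: "r \<ge> 1" using assms by (simp add: r_def)
  have rk: "r * r = real k" by (simp add: r_def)
  have e: "2 / sqrt (real k) - 2 / real k = 2 * (r - 1) / (r * r)"
    unfolding rk[symmetric] r_def[symmetric] using r1 by (simp add: field_simps)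
  have rr: "r * r > 0" using r1 by simp
  show "0 \<le> 2 / sqrt (real k) - 2 / real k" unfolding e using r1 by simp
  have "(r - 1) * (r - 1) \<ge> 0" by simp
  then have "2 * (r - 1) \<le> r * r" by (simp add: algebra_simps)
  then show "2 / sqrt (real k) - 2 / real k \<le> 1" unfolding e using rr by simp
qed

theorem theorem4:
  fixes A :: "nat \<Rightarrow> 'c set" and C :: "'c set" and k n :: nat and W Wbar :: "'c set"
  assumes "valid_instance A C k n"
    and "mes_outcome A C k n W"
    and "av_completion A C k n W Wbar"
  shows "real (sw A n Wbar) \<ge> (2 / sqrt (real k) - 2 / real k) * real (opt_sw A C k n)"
proof -
  define \<alpha> where "\<alpha> = 2 / sqrt (real k) - 2 / real k"
  have vi: "finite C" "n \<ge> 1" "k \<ge> 1" "k \<le> card C" using assms(1) by (auto simp: valid_instance_def)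
  have a01: "0 \<le> \<alpha>" "\<alpha> \<le> 1" using alpha_bounds[OF vi(3)] by (auto simp: \<alpha>_def)
  obtain b where reach: "mes_reach A C k n W b" and termc: "\<forall>c\<in>C - W. \<forall>\<rho>. \<not> affordable_at A n b c \<rho>"
    using assms(2) unfolding mes_outcome_def by blast
  have BI: "W \<subseteq> C" "finite W" "\<forall>i. 0 \<le> b i \<and> b i \<le> real k / real n"
    "(\<Sum>i\<in>voters n. b i) = real k - real (card W)"
    "\<forall>w\<in>W. 1 \<le> real (card (supporters A n w)) * (real k / real n)"
    using basic_inv[OF reach vi(2,3)] by auto
  have mk: "card W \<le> k"
  proof -
    have "0 \<le> (\<Sum>i\<in>voters n. b i)" by (rule sum_nonneg) (use BI(3) in auto)
    then show ?thesis using BI(4) by simp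
  qed
  obtain T where T: "T \<subseteq> C - W" "card T = k - card W"
    and Topt: "\<forall>T'. T' \<subseteq> C - W \<and> card T' = k - card W \<longrightarrow>
          (\<Sum>c\<in>T'. card (supporters A n c)) \<le> (\<Sum>c\<in>T. card (supporters A n c))"
    and Wb: "Wbar = W \<union> T"
    using assms(3) unfolding av_completion_def by blast
  define s where "s c = card (supporters A n c)" for c
  define u where "u = real n / real k"
  have upos: "u > 0" using vi by (simp add: u_def)
  have sW: "\<forall>w\<in>W. u \<le> real (s w)"
  proof
    fix w assume "w \<in> W"
    then have "1 \<le> real (s w) * (real k / real n)" using BI(5) by (simp add: s_def)
    then show "u \<le> real (s w)" using vi by (simp add: u_def field_simps)
  qed
  let ?S = "{sw A n W' | W'. W' \<subseteq> C \<and> card W' = k}"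
  have finS: "finite ?S"
  proof -
    have "finite {W'. W' \<subseteq> C \<and> card W' = k}"
      by (rule finite_subset[of _ "Pow C"]) (use vi(1) in auto)
    then show ?thesis by (rule finite_image_set)
  qed
  have neS: "?S \<noteq> {}"
  proof -
    obtain W' where "W' \<subseteq> C" "card W' = k" using obtain_subset_with_card_n[OF vi(4)] by blast
    then show ?thesis by blast
  qed
  obtain Ws where Ws: "Ws \<subseteq> C" "card Ws = k" "opt_sw A C k n = sw A n Ws"
    using Max_in[OF finS neS] unfolding opt_sw_def by blast
  have finWs: "finite Ws" using Ws(1) vi(1) finite_subset by blast
  have finT: "finite T" using T(1) vi(1) finite_subset by blast
  have S_eq: "real (sw A n Wbar) = (\<Sum>c\<in>W. real (s c)) + (\<Sum>c\<in>T. real (s c))"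
  proof -
    have "sw A n Wbar = (\<Sum>c\<in>W \<union> T. s c)" unfolding Wb s_def using BI(2) finT by (simp add: sw_eq)
    also have "\<dots> = (\<Sum>c\<in>W. s c) + (\<Sum>c\<in>T. s c)"
      by (rule sum.union_disjoint) (use BI(2) finT T(1) in auto)
    finally show ?thesis by simp
  qed
  define Q where "Q = Ws \<inter> W"
  have O_eq: "real (opt_sw A C k n) = (\<Sum>c\<in>Q. real (s c)) + (\<Sum>c\<in>Ws - W. real (s c))"
  proof -
    have "opt_sw A C k n = (\<Sum>c\<in>Ws. s c)" unfolding Ws(3) s_def using finWs by (simp add: sw_eq)
    also have "\<dots> = (\<Sum>c\<in>Q. s c) + (\<Sum>c\<in>Ws - W. s c)" unfolding Q_def by (rule sum.Int_Diff[OF finWs])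
    finally show ?thesis by simp
  qed
  define xs where "xs = Max (insert 0 (s ` (C - W)))"
  have finX: "finite (insert 0 (s ` (C - W)))" using vi(1) by simp
  have xs_ge: "\<forall>c\<in>C - W. s c \<le> xs" unfolding xs_def using finX by (auto intro: Max_ge)
  have QW: "Q \<subseteq> W" unfolding Q_def by auto
  have aM: "card Q \<le> card W" by (rule card_mono[OF BI(2) QW])
  have key1: "(\<Sum>c\<in>Ws - W. real (s c)) \<le> (\<Sum>c\<in>T. real (s c)) + real (card W - card Q) * real xs"
  proof -
    have cD: "card (Ws - W) = k - card Q"
      unfolding Q_def using card_Diff_subset_Int[of Ws W] finWs Ws(2) by simp
    then have "k - card W \<le> card (Ws - W)" using aM by simp
    then obtain U where U: "U \<subseteq> Ws - W" "card U = k - card W" "finite U"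
      using obtain_subset_with_card_n by metis
    have UC: "U \<subseteq> C - W" using U(1) Ws(1) by auto
    have "(\<Sum>c\<in>U. s c) \<le> (\<Sum>c\<in>T. s c)" using Topt UC U(2) unfolding s_def by blast
    then have sU: "(\<Sum>c\<in>U. real (s c)) \<le> (\<Sum>c\<in>T. real (s c))" by (metis of_nat_le_iff of_nat_sum)
    have finD: "finite (Ws - W)" using finWs by simp
    have spl: "(\<Sum>c\<in>Ws - W. real (s c)) = (\<Sum>c\<in>(Ws - W) - U. real (s c)) + (\<Sum>c\<in>U. real (s c))"
      by (rule sum.subset_diff[OF U(1) finD])
    have cR: "card ((Ws - W) - U) = card W - card Q"
      using card_Diff_subset[OF U(3) U(1)] cD U(2) mk aM by simp
    have "(\<Sum>c\<in>(Ws - W) - U. real (s c)) \<le> real (card ((Ws - W) - U)) * real xs"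
      by (rule sum_bounded_above) (use xs_ge Ws(1) in auto)
    then show ?thesis using spl sU cR by simp
  qed
  have key2: "(\<Sum>c\<in>W. real (s c)) - \<alpha> * (\<Sum>c\<in>Q. real (s c))
      \<ge> (\<Sum>w\<in>W. min (real (s w)) (real xs)) - \<alpha> * real (card Q) * real xs"
  proof -
    have finQ: "finite Q" using BI(2) QW finite_subset by blast
    have sp1: "(\<Sum>c\<in>W. real (s c)) = (\<Sum>c\<in>W - Q. real (s c)) + (\<Sum>c\<in>Q. real (s c))"
      by (rule sum.subset_diff[OF QW BI(2)])
    have sp2: "(\<Sum>c\<in>W. min (real (s c)) (real xs)) = (\<Sum>c\<in>W - Q. min (real (s c)) (real xs)) + (\<Sum>c\<in>Q. min (real (s c)) (real xs))"
      by (rule sum.subset_diff[OF QW BI(2)])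
    have m1: "(\<Sum>c\<in>W - Q. min (real (s c)) (real xs)) \<le> (\<Sum>c\<in>W - Q. real (s c))"
      by (rule sum_mono) simp
    have m2: "(\<Sum>c\<in>Q. min (real (s c)) (real xs)) \<le> (\<Sum>c\<in>Q. real (s c))"
      by (rule sum_mono) simp
    have m2': "(1 - \<alpha>) * (\<Sum>c\<in>Q. min (real (s c)) (real xs)) \<le> (1 - \<alpha>) * (\<Sum>c\<in>Q. real (s c))"
      using m2 a01 by (intro mult_left_mono) auto
    have m3: "(\<Sum>c\<in>Q. min (real (s c)) (real xs)) \<le> real (card Q) * real xs"
      by (rule sum_bounded_above) simp
    have m3': "\<alpha> * (\<Sum>c\<in>Q. min (real (s c)) (real xs)) \<le> \<alpha> * (real (card Q) * real xs)"
      using m3 a01 by (intro mult_left_mono) auto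
    show ?thesis using sp1 sp2 m1 m2' m3' by (simp add: algebra_simps)
  qed
  have key3: "(\<Sum>w\<in>W. min (real (s w)) (real xs)) \<ge> \<alpha> * real (card W) * real xs"
  proof (cases "real xs \<le> u")
    case True
    have "(\<Sum>w\<in>W. min (real (s w)) (real xs)) = (\<Sum>w\<in>W. real xs)"
      by (rule sum.cong) (use sW True in force)+
    also have "\<dots> = real (card W) * real xs" by simp
    finally show ?thesis using a01 by (simp add: mult_left_le_one_le mult_nonneg_nonneg mult.assoc)
  next
    case False
    then have xpos: "xs > 0" using upos by (cases xs) auto
    then have "xs \<in> s ` (C - W)" unfolding xs_def
      using Max_in[OF finX] by (metis empty_not_insert insertE less_irrefl xs_def)
    then obtain c where c: "c \<in> C - W" "s c = xs" by auto
    have cnt: "real (cnt A n xs W) > real xs * real k / real n - 1"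
      by (rule cheap_final[OF reach vi(2,3)]) (use c termc xpos in \<open>auto simp: s_def\<close>)
    define Hi where "Hi = {w\<in>W. xs \<le> s w}"
    have cntH: "cnt A n xs W = card Hi" unfolding cnt_def Hi_def s_def by simp
    have HW: "Hi \<subseteq> W" unfolding Hi_def by auto
    have finH: "finite Hi" using BI(2) HW finite_subset by blast
    have sp: "(\<Sum>w\<in>W. min (real (s w)) (real xs)) = (\<Sum>w\<in>W - Hi. min (real (s w)) (real xs)) + (\<Sum>w\<in>Hi. min (real (s w)) (real xs))"
      by (rule sum.subset_diff[OF HW BI(2)])
    have h1: "(\<Sum>w\<in>Hi. min (real (s w)) (real xs)) = real (card Hi) * real xs"
    proof -
      have "(\<Sum>w\<in>Hi. min (real (s w)) (real xs)) = (\<Sum>w\<in>Hi. real xs)"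
        by (rule sum.cong) (auto simp: Hi_def)
      then show ?thesis by simp
    qed
    have h2: "(\<Sum>w\<in>W - Hi. min (real (s w)) (real xs)) \<ge> real (card (W - Hi)) * u"
    proof -
      have "(\<Sum>w\<in>W - Hi. u) \<le> (\<Sum>w\<in>W - Hi. min (real (s w)) (real xs))"
        by (rule sum_mono) (use sW False in auto)
      then show ?thesis by simp
    qed
    have cWH: "card (W - Hi) = card W - card Hi" by (rule card_Diff_subset[OF finH HW])
    have HleW: "card Hi \<le> card W" by (rule card_mono[OF BI(2) HW])
    have "\<alpha> * real (card W) * real xs \<le> real (card W) * u + real (card Hi) * (real xs - u)"
      unfolding \<alpha>_def
    proof (rule alg)
      show "1 \<le> real k" using vi by simp
      show "0 \<le> real (card W)" by simp
      show "real (card W) \<le> real k" using mk by simp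
      show "0 < u" by (rule upos)
      show "u < real xs" using False by simp
      show "real xs / u - 1 < real (card Hi)" using cnt cntH vi by (simp add: u_def field_simps)
      show "real (card Hi) \<le> real (card W)" using HleW by simp
    qed
    also have "\<dots> = real (card (W - Hi)) * u + real (card Hi) * real xs"
      using cWH HleW by (simp add: algebra_simps of_nat_diff)
    also have "\<dots> \<le> (\<Sum>w\<in>W. min (real (s w)) (real xs))" using sp h1 h2 by simp
    finally show ?thesis .
  qed
  have Tnn: "0 \<le> (\<Sum>c\<in>T. real (s c))" by (rule sum_nonneg) simp
  have e1: "\<alpha> * (\<Sum>c\<in>T. real (s c)) \<le> (\<Sum>c\<in>T. real (s c))" using a01 Tnn by (simp add: mult_left_le_one_le)
  have e2: "real (card W - card Q) = real (card W) - real (card Q)" using aM by simp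
  have "\<alpha> * real (opt_sw A C k n) = \<alpha> * (\<Sum>c\<in>Q. real (s c)) + \<alpha> * (\<Sum>c\<in>Ws - W. real (s c))"
    unfolding O_eq by (simp add: algebra_simps)
  also have "\<alpha> * (\<Sum>c\<in>Ws - W. real (s c)) \<le> \<alpha> * ((\<Sum>c\<in>T. real (s c)) + real (card W - card Q) * real xs)"
    using key1 a01 by (intro mult_left_mono) auto
  finally have "\<alpha> * real (opt_sw A C k n) \<le> \<alpha> * (\<Sum>c\<in>Q. real (s c)) + \<alpha> * (\<Sum>c\<in>T. real (s c)) + \<alpha> * (real (card W) - real (card Q)) * real xs"
    unfolding e2 by (simp add: algebra_simps)
  then show ?thesis unfolding \<alpha>_def[symmetric] S_eq using key2 key3 e1
    by (simp add: algebra_simps)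
qed

end
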